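(* In the Mahi-Mahi protocol, if an honest validator directly commits some block in a leader slot $s$, then no other honest validator decides to skip the slot $s$ (neither directly nor indirectly).
   Context: Setting: $n=3f+1$ validators, at most $f$ Byzantine; honest validators create exactly one block per round, Byzantine ones may equivocate. Each valid block of round $r$ references (parents) at least $2f+1$ blocks of round $r-1$. Each validator has a local DAG of valid blocks, containing a block only with all its causal history. There is a path from $b$ to $b'$ if $b'$ is reached from $b$ along parent references. A block $b$ of round $r'$ is a vote for a block $L$ of round $r<r'$ with author $a$ if the first block with author $a$ and round $r$ met in the deterministic depth-first search from $b$ is $L$. With wave length $w\in\{4,5\}$, a block of round $r+w-1$ is a certificate for a block $L$ of round $r$ if at least $2f+1$ of its parents are votes for $L$. Leader slots of round $r$ are pairs (validator, $r$) chosen by a global common coin, identical for all validators, totally ordered by round then coin order. A validator classifies slots: direct skip if its local DAG has $2f+1$ blocks of round $r+w-2$ that are not votes for the block $L$ in the slot; direct commit of $L$ if it has $2f+1$ round-$(r+w-1)$ certificates for $L$; otherwise the indirect rule: with anchor the first slot (in slot order) of round $>r+w-1$ not classified as skip, if the anchor is committed with block $A$, commit $L$ if there is a certificate $c$ for $L$ with a path from $A$ to $c$, else skip; if the anchor is undecided, the slot is undecided. *)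

theory Defs
  imports Main
begin

text \<open>Protocol parameters (global, identical for all validators):
  auth b   : author of block b (validators are 0 ..< 3f+1)
  rnd b    : round of block b
  par b    : ordered list of parent references of b (order fixes the deterministic DFS)
  nf       : the fault bound f (n = 3f+1)
  wl       : the wave length w
  leaders r: leader slots of round r in common-coin order (slot (r,i) has leader leaders r ! i)\<close>

record 'b sys =
  auth :: "'b \<Rightarrow> nat"
  rnd :: "'b \<Rightarrow> nat"
  par :: "'b \<Rightarrow> 'b list"
  nf :: nat
  wl :: nat
  leaders :: "nat \<Rightarrow> nat list"

datatype 'b status = Commit 'b | Skip | Undecided

definition valid_block :: "'b sys \<Rightarrow> 'b set \<Rightarrow> 'b \<Rightarrow> bool" where
  "valid_block S B b \<longleftrightarrow>
     (rnd S b = 0 \<longrightarrow> par S b = []) \<and>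
     (0 < rnd S b \<longrightarrow> (\<forall>p\<in>set (par S b). p \<in> B \<and> rnd S p = rnd S b - 1)
                     \<and> 2 * nf S + 1 \<le> card (auth S ` set (par S b)))"

definition local_dag :: "'b sys \<Rightarrow> 'b set \<Rightarrow> 'b set \<Rightarrow> bool" where
  "local_dag S B D \<longleftrightarrow> finite D \<and> D \<subseteq> B \<and> (\<forall>b\<in>D. set (par S b) \<subseteq> D)"

text \<open>Preorder depth-first traversal (with fuel = depth). The sequence of first occurrences
  equals the visit order of the DFS with a visited set.\<close>
primrec trav :: "('b \<Rightarrow> 'b list) \<Rightarrow> nat \<Rightarrow> 'b \<Rightarrow> 'b list" where
  "trav p 0 b = [b]"
| "trav p (Suc k) b = b # concat (map (trav p k) (p b))"

definition dfs_order :: "'b sys \<Rightarrow> 'b \<Rightarrow> 'b list" where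
  "dfs_order S b = trav (par S) (rnd S b) b"

definition is_vote :: "'b sys \<Rightarrow> 'b \<Rightarrow> 'b \<Rightarrow> bool" where
  "is_vote S b L \<longleftrightarrow> rnd S L < rnd S b \<and>
     find (\<lambda>x. auth S x = auth S L \<and> rnd S x = rnd S L) (dfs_order S b) = Some L"

definition is_cert :: "'b sys \<Rightarrow> 'b \<Rightarrow> 'b \<Rightarrow> bool" where
  "is_cert S c L \<longleftrightarrow> rnd S c = rnd S L + wl S - 1 \<and>
     2 * nf S + 1 \<le> card (auth S ` {p \<in> set (par S c). is_vote S p L})"

definition path :: "'b sys \<Rightarrow> 'b \<Rightarrow> 'b \<Rightarrow> bool" where
  "path S b b' \<longleftrightarrow> (b, b') \<in> {(x, y). y \<in> set (par S x)}\<^sup>*"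

definition in_slot :: "'b sys \<Rightarrow> nat \<times> nat \<Rightarrow> 'b \<Rightarrow> bool" where
  "in_slot S s L \<longleftrightarrow> auth S L = leaders S (fst s) ! snd s \<and> rnd S L = fst s"

definition direct_skip :: "'b sys \<Rightarrow> 'b set \<Rightarrow> nat \<times> nat \<Rightarrow> bool" where
  "direct_skip S D s \<longleftrightarrow>
     2 * nf S + 1 \<le> card (auth S ` {b \<in> D. rnd S b = fst s + wl S - 2 \<and>
                                      \<not> (\<exists>L. in_slot S s L \<and> is_vote S b L)})"

definition direct_commit :: "'b sys \<Rightarrow> 'b set \<Rightarrow> nat \<times> nat \<Rightarrow> 'b \<Rightarrow> bool" where
  "direct_commit S D s L \<longleftrightarrow> L \<in> D \<and> in_slot S s L \<and>
     2 * nf S + 1 \<le> card (auth S ` {c \<in> D. is_cert S c L})"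

definition maxround :: "'b sys \<Rightarrow> 'b set \<Rightarrow> nat" where
  "maxround S D = Max (rnd S ` D)"

definition slots_between :: "'b sys \<Rightarrow> nat \<Rightarrow> nat \<Rightarrow> (nat \<times> nat) list" where
  "slots_between S lo hi =
     concat (map (\<lambda>r'. map (\<lambda>j. (r', j)) [0..<length (leaders S r')]) [lo..<Suc hi])"

text \<open>Decision rule (with recursion fuel). The anchor is the first slot of round > r+w-1 not
  classified as skip; slots beyond the highest round of the DAG are never decided.\<close>
primrec dec :: "nat \<Rightarrow> 'b sys \<Rightarrow> 'b set \<Rightarrow> nat \<times> nat \<Rightarrow> 'b status" where
  "dec 0 S D s = Undecided"
| "dec (Suc k) S D s =
    (if direct_skip S D s then Skip
     else if (\<exists>L. direct_commit S D s L) then Commit (SOME L. direct_commit S D s L)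
     else (case find (\<lambda>s'. dec k S D s' \<noteq> Skip)
                     (slots_between S (fst s + wl S) (maxround S D)) of
             None \<Rightarrow> Undecided
           | Some s' \<Rightarrow>
               (case dec k S D s' of
                  Commit A \<Rightarrow>
                    (if (\<exists>L c. in_slot S s L \<and> c \<in> D \<and> is_cert S c L \<and> path S A c)
                     then Commit (SOME L. \<exists>c. in_slot S s L \<and> c \<in> D \<and> is_cert S c L \<and> path S A c)
                     else Skip)
                | _ \<Rightarrow> Undecided)))"

text \<open>Fuel maxround+1 suffices: nested calls increase the round by at least w and only
  concern rounds up to maxround.\<close>
definition decide :: "'b sys \<Rightarrow> 'b set \<Rightarrow> nat \<times> nat \<Rightarrow> 'b status" where
  "decide S D s = dec (Suc (maxround S D)) S D s"

end

theory Submission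
  imports Defs
begin

lemma quorum:
  assumes "X \<subseteq> {..<N}" "Y \<subseteq> {..<N}" "2*f+1 \<le> card X" "2*f+1 \<le> card Y"
    "N = 3*f+1" "card ({..<N} - H) \<le> f"
  shows "\<exists>a\<in>H. a \<in> X \<and> a \<in> Y"
proof (rule ccontr)
  assume nn: "\<not> ?thesis"
  have fx: "finite X" "finite Y" using assms(1,2) finite_subset by auto
  have "card (X \<union> Y) \<le> N" using assms(1,2) card_mono[of "{..<N}" "X \<union> Y"] by auto
  moreover have "card X + card Y = card (X \<union> Y) + card (X \<inter> Y)" using card_Un_Int fx by blast
  moreover have "X \<inter> Y \<subseteq> {..<N} - H" using nn assms(1) by auto
  then have "card (X \<inter> Y) \<le> card ({..<N} - H)" by (intro card_mono) auto
  ultimately show False using assms by linarith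
qed

lemma trav_path: "x \<in> set (trav (par S) k b) \<Longrightarrow> path S b x"
proof (induction k arbitrary: b)
  case 0 then show ?case by (simp add: path_def)
next
  case (Suc k)
  show ?case
  proof (cases "x = b")
    case True then show ?thesis by (simp add: path_def)
  next
    case False
    then obtain p where p: "p \<in> set (par S b)" "x \<in> set (trav (par S) k p)" using Suc.prems by auto
    have "path S p x" using Suc.IH p(2) by blast
    then show ?thesis using p(1) unfolding path_def
      by (meson converse_rtrancl_into_rtrancl case_prodI mem_Collect_eq)
  qed
qed

lemma path_closed:
  assumes "local_dag S B D" "b \<in> D" "path S b x" shows "x \<in> D"
proof -
  have "(b, x) \<in> {(x, y). y \<in> set (par S x)}\<^sup>*" using assms(3) by (simp add: path_def)
  then show ?thesis
  proof (induction rule: rtrancl_induct)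
    case base then show ?case using assms(2) .
  next
    case (step y z) then show ?case using assms(1) unfolding local_dag_def by auto
  qed
qed

lemma path_trans: "path S a b \<Longrightarrow> path S b c \<Longrightarrow> path S a c"
  unfolding path_def by (meson rtrancl_trans)

lemma path_par: "p \<in> set (par S b) \<Longrightarrow> path S b p"
  unfolding path_def by auto

lemma dec_commit:
  assumes "local_dag S B D" "dec k S D s = Commit A"
  shows "A \<in> D \<and> in_slot S s A"
  using assms(2)
proof (induction k arbitrary: s A)
  case 0 then show ?case by simp
next
  case (Suc k)
  show ?case
  proof (cases "direct_skip S D s")
    case True then show ?thesis using Suc.prems by simp
  next
    case ns: False
    show ?thesis
    proof (cases "\<exists>L. direct_commit S D s L")
      case True
      then have "direct_commit S D s A" using Suc.prems ns
        by simp (metis someI_ex)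
      then show ?thesis unfolding direct_commit_def by simp
    next
      case nc: False
      let ?Q = "\<lambda>L. \<exists>c. in_slot S s L \<and> c \<in> D \<and> is_cert S c L \<and> (\<exists>A'. path S A' c)"
      have ex: "\<exists>L c. in_slot S s L \<and> c \<in> D \<and> is_cert S c L \<and> path S A' c" and
           AA: "A = (SOME L. \<exists>c. in_slot S s L \<and> c \<in> D \<and> is_cert S c L \<and> path S A' c)"
           if "dec k S D s' = Commit A'"
              "find (\<lambda>s'. dec k S D s' \<noteq> Skip) (slots_between S (fst s + wl S) (maxround S D)) = Some s'"
           for s' A'
        using Suc.prems ns nc that by (auto split: if_splits)
      obtain s' A' where h: "find (\<lambda>s'. dec k S D s' \<noteq> Skip) (slots_between S (fst s + wl S) (maxround S D)) = Some s'"
        "dec k S D s' = Commit A'"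
        using Suc.prems ns nc by (auto split: option.splits status.splits if_splits)
      from someI_ex[OF ex[OF h(2) h(1)]] AA[OF h(2) h(1)]
      obtain c where c: "in_slot S s A" "c \<in> D" "is_cert S c A" by auto
      have "auth S ` {p \<in> set (par S c). is_vote S p A} \<noteq> {}"
        using c(3) unfolding is_cert_def by (metis card.empty not_one_le_zero add_is_0 le_zero_eq one_neq_zero)
      then obtain p where p: "p \<in> set (par S c)" "is_vote S p A" by auto
      have "p \<in> D" using p(1) c(2) assms(1) unfolding local_dag_def by auto
      moreover have "A \<in> set (dfs_order S p)" using p(2) unfolding is_vote_def
        by (metis find_Some_iff nth_mem)
      then have "path S p A" unfolding dfs_order_def using trav_path by metis
      ultimately show ?thesis using path_closed[OF assms(1)] c(1) by blast
    qed
  qed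
qed

lemma reach:
  assumes valid: "\<forall>b\<in>B. valid_block S B b" and au: "\<forall>b\<in>B. auth S b < N"
  shows "b \<in> B \<Longrightarrow> rnd S b = R + Suc n \<Longrightarrow> 2 * nf S + 1 \<le> card (auth S ` {x \<in> B. rnd S x = R \<and> path S b x})"
proof (induction n arbitrary: b)
  case 0
  have v: "valid_block S B b" using valid 0 by blast
  have pp: "\<forall>p\<in>set (par S b). p \<in> B \<and> rnd S p = R" "2 * nf S + 1 \<le> card (auth S ` set (par S b))"
    using v 0(2) unfolding valid_block_def by simp_all
  have fin: "finite (auth S ` {x \<in> B. rnd S x = R \<and> path S b x})"
    by (rule finite_subset[of _ "{..<N}"]) (use au in blast)+
  have "auth S ` set (par S b) \<subseteq> auth S ` {x \<in> B. rnd S x = R \<and> path S b x}"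
  proof (rule image_mono)
    show "set (par S b) \<subseteq> {x \<in> B. rnd S x = R \<and> path S b x}"
      using pp(1) path_par by fastforce
  qed
  then show ?case using pp(2) card_mono[OF fin] by (meson le_trans)
next
  case (Suc n)
  have v: "valid_block S B b" using valid Suc.prems(1) by blast
  have pp: "\<forall>p\<in>set (par S b). p \<in> B \<and> rnd S p = R + Suc n" "2 * nf S + 1 \<le> card (auth S ` set (par S b))"
    using v Suc.prems(2) unfolding valid_block_def by simp_all
  then have "set (par S b) \<noteq> {}" by (metis card.empty image_empty not_one_le_zero add_is_0 le_zero_eq one_neq_zero)
  then obtain p where p: "p \<in> set (par S b)" by (meson all_not_in_conv)
  then have pB: "p \<in> B" "rnd S p = R + Suc n" using pp by auto
  have fin: "finite (auth S ` {x \<in> B. rnd S x = R \<and> path S b x})"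
    by (rule finite_subset[of _ "{..<N}"]) (use au in blast)+
  have "auth S ` {x \<in> B. rnd S x = R \<and> path S p x} \<subseteq> auth S ` {x \<in> B. rnd S x = R \<and> path S b x}"
  proof (rule image_mono)
    show "{x \<in> B. rnd S x = R \<and> path S p x} \<subseteq> {x \<in> B. rnd S x = R \<and> path S b x}"
      using path_trans[OF path_par[OF p]] by blast
  qed
  then show ?case using Suc.IH[OF pB] card_mono[OF fin] by (meson le_trans)
qed

theorem lemma4:
  fixes S :: "'b sys" and B :: "'b set" and Hon :: "nat set" and D :: "nat \<Rightarrow> 'b set"
    and v v' r i :: nat and L :: 'b
  assumes "wl S \<in> {4, 5}"
    and "\<forall>b\<in>B. auth S b < 3 * nf S + 1"
    and "Hon \<subseteq> {..<3 * nf S + 1}"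
    and "card ({..<3 * nf S + 1} - Hon) \<le> nf S"
    and "\<forall>b\<in>B. valid_block S B b"
    and "\<forall>b1\<in>B. \<forall>b2\<in>B. auth S b1 \<in> Hon \<longrightarrow> auth S b1 = auth S b2 \<longrightarrow>
            rnd S b1 = rnd S b2 \<longrightarrow> b1 = b2"
    and "\<forall>r'. distinct (leaders S r') \<and> set (leaders S r') \<subseteq> {..<3 * nf S + 1}"
    and "\<forall>u\<in>Hon. local_dag S B (D u)"
    and "v \<in> Hon" and "v' \<in> Hon"
    and "i < length (leaders S r)"
    and "direct_commit S (D v) (r, i) L"
  shows "decide S (D v') (r, i) \<noteq> Skip"
proof
  assume sk: "decide S (D v') (r, i) = Skip"
  have ldv: "local_dag S B (D v)" and ldv': "local_dag S B (D v')" using assms(8-10) by auto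
  have DvB: "D v \<subseteq> B" "D v' \<subseteq> B" using ldv ldv' unfolding local_dag_def by auto
  have Lsl: "in_slot S (r, i) L" and LD: "L \<in> D v"
    and cq: "2 * nf S + 1 \<le> card (auth S ` {c \<in> D v. is_cert S c L})"
    using assms(12) unfolding direct_commit_def by auto
  have rL: "rnd S L = r" using Lsl unfolding in_slot_def by simp
  have w4: "wl S \<ge> 4" using assms(1) by auto
  have Ysub: "auth S ` {c \<in> D v. is_cert S c L} \<subseteq> {..<3 * nf S + 1}" using assms(2) DvB by auto
  have "auth S ` {c \<in> D v. is_cert S c L} \<noteq> {}" using cq by (metis card.empty not_one_le_zero add_is_0 le_zero_eq one_neq_zero)
  then obtain c0 where c0: "c0 \<in> D v" "is_cert S c0 L" by auto
  have rc0: "rnd S c0 = r + wl S - 1" using c0(2) rL unfolding is_cert_def by simp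
  have nds: "\<not> direct_skip S (D v') (r, i)"
  proof
    assume ds: "direct_skip S (D v') (r, i)"
    let ?Y = "auth S ` {b \<in> D v'. rnd S b = r + wl S - 2 \<and> \<not> (\<exists>L. in_slot S (r, i) L \<and> is_vote S b L)}"
    let ?X = "auth S ` {p \<in> set (par S c0). is_vote S p L}"
    have c0B: "c0 \<in> B" using c0 DvB by auto
    have vc0: "valid_block S B c0" using assms(5) c0B by auto
    have parB: "\<forall>p\<in>set (par S c0). p \<in> B \<and> rnd S p = r + wl S - 2"
      using vc0 rc0 w4 unfolding valid_block_def by auto
    have q1: "?X \<subseteq> {..<3 * nf S + 1}" using parB assms(2) by auto
    have q2: "?Y \<subseteq> {..<3 * nf S + 1}" using DvB assms(2) by auto
    have q3: "2 * nf S + 1 \<le> card ?X" using c0(2) unfolding is_cert_def by simp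
    have q4: "2 * nf S + 1 \<le> card ?Y" using ds unfolding direct_skip_def by simp
    obtain a where a: "a \<in> Hon" "a \<in> ?X" "a \<in> ?Y" using quorum[OF q1 q2 q3 q4 refl assms(4)] by (elim bexE conjE)
    from a(2) obtain p where p: "p \<in> set (par S c0)" "is_vote S p L" "auth S p = a" by auto
    from a(3) obtain b where b: "b \<in> D v'" "rnd S b = r + wl S - 2" "\<not> (\<exists>L. in_slot S (r, i) L \<and> is_vote S b L)" "auth S b = a"
      by auto
    note pb = a(1) p b
    have "p = b" using assms(6) pb parB DvB by (metis subsetD)
    then show False using pb Lsl by blast
  qed
  obtain s' A where h: "find (\<lambda>s'. dec (maxround S (D v')) S (D v') s' \<noteq> Skip)
        (slots_between S (r + wl S) (maxround S (D v'))) = Some s'"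
      "dec (maxround S (D v')) S (D v') s' = Commit A"
      "\<not> (\<exists>L c. in_slot S (r, i) L \<and> c \<in> D v' \<and> is_cert S c L \<and> path S A c)"
    using sk nds unfolding decide_def
    by (auto split: option.splits status.splits if_splits)
  have As: "A \<in> D v'" "in_slot S s' A" using dec_commit[OF ldv' h(2)] by auto
  have "s' \<in> set (slots_between S (r + wl S) (maxround S (D v')))"
    using h(1) by (metis find_Some_iff nth_mem)
  then have "fst s' \<ge> r + wl S" unfolding slots_between_def by auto
  then have rA: "rnd S A \<ge> r + wl S" using As(2) unfolding in_slot_def by simp
  define R where "R = r + wl S - 1"
  have "rnd S A = R + Suc (rnd S A - R - 1)" using rA w4 unfolding R_def by linarith
  then obtain n where n: "rnd S A = R + Suc n" by blast
  have AB: "A \<in> B" using As DvB by auto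
  have X: "2 * nf S + 1 \<le> card (auth S ` {x \<in> B. rnd S x = R \<and> path S A x})"
    using reach[OF assms(5) assms(2) AB n] .
  have Xsub: "auth S ` {x \<in> B. rnd S x = R \<and> path S A x} \<subseteq> {..<3 * nf S + 1}" using assms(2) by auto
  obtain a where a: "a \<in> Hon" "a \<in> auth S ` {x \<in> B. rnd S x = R \<and> path S A x}"
    "a \<in> auth S ` {c \<in> D v. is_cert S c L}"
    using quorum[OF Xsub Ysub X cq refl assms(4)] by (elim bexE conjE)
  from a(2) obtain x where x: "auth S x = a" "x \<in> B" "rnd S x = R" "path S A x" by auto
  from a(3) obtain c where c: "auth S c = a" "c \<in> D v" "is_cert S c L" by auto
  note xc = x c
  have "rnd S c = R" using xc(7) rL unfolding is_cert_def R_def by simp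
  then have "x = c" using assms(6) xc \<open>a \<in> Hon\<close> DvB by (metis subsetD)
  then have "c \<in> D v'" using path_closed[OF ldv' As(1)] xc(4) by simp
  then show False using h(3) Lsl xc \<open>x = c\<close> by blast
qed

end
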